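(* Let $B \ge 2$ be an integer base, let $f, g$ be nonnegative integers with base-$B$ digits $f_i, g_j$ (so $f = \sum_i f_i B^i$, $g = \sum_j g_j B^j$, $0 \le f_i, g_j < B$, digits with index outside $[0..\mathrm{prec}_B f)$ resp. $[0..\mathrm{prec}_B g)$ being $0$), and let $0 \le a \le b$ be integers. Set $G = \min(a, \lceil \log_B \mathrm{prec}_B g \rceil + 1)$. Compute by classical column summation starting at column $a-G$: set $c'_{a-G} = 0$ and for $k = a-G, \dots, b$ let $s'_k = c'_k + \sum_{i=0}^{k} f_i g_{k-i}$, $d_k = s'_k \bmod B$, $c'_{k+1} = \lfloor s'_k / B \rfloor$. Then the value $D = \sum_{k=a}^{b} d_k B^k$ equals the clipped product $\mathrm{clip}_{B,[a..b]}(fg)$ to within one unit in position $a$ (i.e., to within $B^a$); that is, computing the $[a..b]$ clipped product to within one unit in position $a$ by classical multiplication requires summing only columns $a-G, \dots, b$, with the columns $a-G,\dots,a-1$ used only to determine the carry into column $a$ (at most $G$ guard digits).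
   Context: For a positive integer $n$, $\mathrm{prec}_B n = \lfloor \log_B |n| \rfloor + 1$ is the number of base-$B$ digits of $n$. For an integer $u = \sum_i u_{i} B^i$ with base-$B$ digits $u_i$ and an integer interval $[a..b] = \{i \in \mathbb{Z} : a \le i \le b\}$, the clipped value is $\mathrm{clip}_{B,[a..b]}\, u = \sum_{i=a}^{b} u_i B^i$. Classical multiplication forms $fg$ by summing, column by column from low to high, the digit products $f_i g_j$ with $i+j=k$ in column $k$ together with the carry from column $k-1$. *)

theory Defs
  imports "HOL-Number_Theory.Cong" Complex_Main
begin

definition digit :: "nat \<Rightarrow> nat \<Rightarrow> nat \<Rightarrow> nat" where
  "digit B n i = (n div B ^ i) mod B"

definition prec :: "nat \<Rightarrow> nat \<Rightarrow> nat" where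
  "prec B n = (if n = 0 then 0 else nat \<lfloor>log (real B) (real n)\<rfloor> + 1)"

definition clip :: "nat \<Rightarrow> nat \<Rightarrow> nat \<Rightarrow> nat \<Rightarrow> nat" where
  "clip B a b u = (\<Sum>i=a..b. digit B u i * B ^ i)"

definition colsum :: "nat \<Rightarrow> nat \<Rightarrow> nat \<Rightarrow> nat \<Rightarrow> nat" where
  "colsum B f g k = (\<Sum>i=0..k. digit B f i * digit B g (k - i))"

text \<open>carry B f g s n = c'_{s+n}, the carry into column s+n when summation starts at
  column s with c'_s = 0 and c'_{k+1} = floor((c'_k + colsum k) / B).\<close>
primrec carry :: "nat \<Rightarrow> nat \<Rightarrow> nat \<Rightarrow> nat \<Rightarrow> nat \<Rightarrow> nat" where
  "carry B f g s 0 = 0"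
| "carry B f g s (Suc n) = (carry B f g s n + colsum B f g (s + n)) div B"

definition guard :: "nat \<Rightarrow> nat \<Rightarrow> nat \<Rightarrow> nat" where
  "guard B g a = min a (nat \<lceil>log (real B) (real (prec B g))\<rceil> + 1)"

definition outdigit :: "nat \<Rightarrow> nat \<Rightarrow> nat \<Rightarrow> nat \<Rightarrow> nat \<Rightarrow> nat" where
  "outdigit B f g s k = (carry B f g s (k - s) + colsum B f g k) mod B"

definition truncD :: "nat \<Rightarrow> nat \<Rightarrow> nat \<Rightarrow> nat \<Rightarrow> nat \<Rightarrow> nat" where
  "truncD B f g a b = (\<Sum>k=a..b. outdigit B f g (a - guard B g a) k * B ^ k)"

end

theory Submission imports Defs "HOL-Number_Theory.Cong" begin

lemma sum_split_add: "(\<Sum>k<a+n. h k) = (\<Sum>k<a. h k) + (\<Sum>t<n. h (a+t))" for h :: "nat \<Rightarrow> nat"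
  by (induction n) auto

lemma carry_gen:
  assumes "B > 0"
  shows "carry B f g s (n+m) = (carry B f g s n + (\<Sum>t<m. colsum B f g (s+n+t) * B^t)) div B^m"
proof (induction m)
  case 0 then show ?case by simp
next
  case (Suc m)
  let ?X = "carry B f g s n + (\<Sum>t<m. colsum B f g (s+n+t) * B^t)"
  have "carry B f g s (n + Suc m) = (?X div B^m + colsum B f g (s+n+m)) div B"
    using Suc by (simp add: add.assoc)
  also have "?X div B^m + colsum B f g (s+n+m) = (?X + colsum B f g (s+n+m) * B^m) div B^m"
    using assms by simp
  also have "(?X + colsum B f g (s+n+m) * B^m) div B^m div B = (?X + colsum B f g (s+n+m) * B^m) div B^(Suc m)"
    by (simp only: power_Suc2 div_mult2_eq)
  finally show ?case by (simp add: add.assoc)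
qed

lemma digits_sum: "(\<Sum>t<n. (x div B^t mod B) * B^t) = x mod B^n" for x B :: nat
proof (induction n)
  case 0 then show ?case by simp
next
  case (Suc n)
  have "x mod B^(Suc n) = B^n * (x div B^n mod B) + x mod B^n"
    unfolding power_Suc2 by (rule mod_mult2_eq)
  then show ?case using Suc by (simp add: mult.commute)
qed

lemma digit_stable:
  fixes B C :: nat and h :: "nat \<Rightarrow> nat"
  assumes "B > 0" "t < n"
  shows "(C + (\<Sum>t'<n. h t' * B^t')) div B^t mod B = (C + (\<Sum>t'<Suc t. h t' * B^t')) div B^t mod B"
  using assms(2)
proof (induction n rule: less_induct)
  case (less n)
  show ?case
  proof (cases "n = Suc t")
    case True then show ?thesis by simp
  next
    case False
    then obtain m where m: "n = Suc m" "t < m" using less.prems by (cases n) auto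
    have mm: "m = t + Suc (m - Suc t)" using m by simp
    have "B^(t + Suc (m - Suc t)) = B^t * (B * B^(m - Suc t))" by (simp only: power_add power_Suc)
    then have powm: "B^m = B^t * (B * B^(m - Suc t))" unfolding mm[symmetric] .
    have "(\<Sum>t'<n. h t' * B^t') = (\<Sum>t'<m. h t' * B^t') + h m * B^m" using m by simp
    also have "h m * B^m = (B * (h m * B^(m - Suc t))) * B^t" unfolding powm by (simp only: ac_simps)
    finally have eqn: "(\<Sum>t'<n. h t' * B^t') = (\<Sum>t'<m. h t' * B^t') + (B * (h m * B^(m - Suc t))) * B^t" .
    have "C + (\<Sum>t'<n. h t' * B^t') = (C + (\<Sum>t'<m. h t' * B^t')) + (B * (h m * B^(m - Suc t))) * B^t"
      unfolding eqn by (simp only: add.assoc)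
    then have "(C + (\<Sum>t'<n. h t' * B^t')) div B^t = B * (h m * B^(m - Suc t)) + (C + (\<Sum>t'<m. h t' * B^t')) div B^t"
      using assms(1) by (simp only: div_mult_self1[OF power_not_zero] less_not_refl2[OF assms(1), THEN not_sym])
    then have "(C + (\<Sum>t'<n. h t' * B^t')) div B^t mod B = (C + (\<Sum>t'<m. h t' * B^t')) div B^t mod B"
      by simp
    then show ?thesis using less m by simp
  qed
qed


lemma g_mod_suc: "g mod B^(Suc m) = g mod B^m + digit B g m * B^m"
  unfolding digit_def power_Suc2 mod_mult2_eq by (simp only: add.commute mult.commute)

lemma conv_exact:
  "(\<Sum>k<M. colsum B f g k * B^k) = (\<Sum>i<M. digit B f i * B^i * (g mod B^(M-i)))"
proof (induction M)
  case 0 then show ?case by simp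
next
  case (Suc M)
  have "(\<Sum>i<Suc M. digit B f i * B^i * (g mod B^(Suc M-i)))
     = (\<Sum>i<M. digit B f i * B^i * (g mod B^(Suc M-i))) + digit B f M * B^M * (g mod B)"
    by simp
  also have "(\<Sum>i<M. digit B f i * B^i * (g mod B^(Suc M-i)))
     = (\<Sum>i<M. digit B f i * B^i * (g mod B^(M-i))) + (\<Sum>i<M. digit B f i * digit B g (M-i)) * B^M"
  proof -
    have "digit B f i * B^i * (g mod B^(Suc M-i)) = digit B f i * B^i * (g mod B^(M-i)) + digit B f i * digit B g (M-i) * B^M"
      if "i < M" for i
    proof -
      have e: "Suc M - i = Suc (M-i)" using that by simp
      have "B^i * B^(M-i) = B^M" using that by (simp add: power_add[symmetric])
      then show ?thesis unfolding e g_mod_suc by (simp add: algebra_simps)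
    qed
    then show ?thesis by (simp add: sum.distrib sum_distrib_right)
  qed
  also have "g mod B = digit B g 0" by (simp add: digit_def)
  finally have "(\<Sum>i<Suc M. digit B f i * B^i * (g mod B^(Suc M-i)))
     = (\<Sum>i<M. digit B f i * B^i * (g mod B^(M-i))) + colsum B f g M * B^M"
    unfolding colsum_def by (simp add: atLeast0AtMost lessThan_Suc_atMost[symmetric] algebra_simps)
  then show ?case using Suc by simp
qed

lemma conv_mod:
  "(f * g) mod B^M = (\<Sum>k<M. colsum B f g k * B^k) mod B^M"
proof -
  have "[(\<Sum>i<M. digit B f i * B^i * (g mod B^(M-i))) = (\<Sum>i<M. digit B f i * B^i * g)] (mod B^M)"
  proof (rule cong_sum)
    fix i assume "i \<in> {..<M}"
    then have "B^M = B^i * B^(M-i)" by (simp add: power_add[symmetric])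
    then have "B^i * (g mod B^(M-i)) = (B^i * g) mod B^M" by (simp add: mod_mult_mult1)
    then have "digit B f i * (B^i * (g mod B^(M-i))) = digit B f i * ((B^i * g) mod B^M)"
      by (rule arg_cong)
    then have "(digit B f i * (B^i * (g mod B^(M-i)))) mod B^M = (digit B f i * (B^i * g)) mod B^M"
      by (simp only: mod_mult_right_eq)
    then show "[digit B f i * B^i * (g mod B^(M-i)) = digit B f i * B^i * g] (mod B^M)"
      unfolding cong_def by (simp only: mult.assoc)
  qed
  note A = this
  have E: "(\<Sum>i<M. digit B f i * B^i * g) = (f mod B^M) * g"
    using digits_sum[of f B M] by (simp add: digit_def sum_distrib_right[symmetric])
  have C: "[(f mod B^M) * g = f * g] (mod B^M)"
    by (simp add: cong_def mod_mult_left_eq)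
  from A E have "[(\<Sum>i<M. digit B f i * B^i * (g mod B^(M-i))) = (f mod B^M) * g] (mod B^M)" by simp
  then have "[(\<Sum>i<M. digit B f i * B^i * (g mod B^(M-i))) = f * g] (mod B^M)" using C by (rule cong_trans)
  then have "[(\<Sum>k<M. colsum B f g k * B^k) = f * g] (mod B^M)" by (simp only: conv_exact)
  then show ?thesis unfolding cong_def by (rule sym)
qed


lemma g_lt_prec:
  assumes "B \<ge> 2" shows "g < B ^ prec B g"
proof (cases "g = 0")
  case True then show ?thesis by (simp add: prec_def)
next
  case False
  have l0: "log (real B) (real g) \<ge> 0" using False assms by simp
  have "real g = real B powr log (real B) (real g)" using False assms by simp
  also have "\<dots> < real B powr (real (nat \<lfloor>log (real B) (real g)\<rfloor> + 1))"
    using assms l0 by (intro powr_less_mono) linarith+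
  also have "\<dots> = real (B ^ prec B g)" using False assms
    by (subst powr_realpow) (auto simp: prec_def)
  finally show ?thesis by linarith
qed

lemma prec_le_guard:
  assumes "B \<ge> 2" shows "prec B g \<le> B ^ nat \<lceil>log (real B) (real (prec B g))\<rceil>"
proof (cases "prec B g = 0")
  case True then show ?thesis by simp
next
  case False
  let ?p = "prec B g"
  have l0: "log (real B) (real ?p) \<ge> 0" using False assms by simp
  have "real ?p = real B powr log (real B) (real ?p)" using False assms by simp
  also have "\<dots> \<le> real B powr (real (nat \<lceil>log (real B) (real ?p)\<rceil>))"
    using assms l0 by (intro powr_mono) linarith+
  also have "\<dots> = real (B ^ nat \<lceil>log (real B) (real ?p)\<rceil>)" using assms
    by (simp add: powr_realpow)
  finally show ?thesis by linarith
qed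

lemma digit_zero: assumes "B \<ge> 2" "j \<ge> prec B g" shows "digit B g j = 0"
proof -
  have "g < B^j" using g_lt_prec[OF assms(1), of g] power_increasing[OF assms(2), of B] assms(1) by linarith
  then show ?thesis by (simp add: digit_def)
qed

lemma digit_le: "B > 0 \<Longrightarrow> digit B x i \<le> B - 1"
proof -
  assume "B > 0"
  then have "x div B^i mod B < B" by simp
  then show ?thesis unfolding digit_def by linarith
qed

lemma colsum_bound:
  assumes "B \<ge> 2" shows "colsum B f g k \<le> prec B g * ((B-1)*(B-1))"
proof -
  let ?p = "prec B g"
  have "colsum B f g k \<le> (\<Sum>i\<in>{0..k}. if k - i < ?p then (B-1)*(B-1) else 0)"
    unfolding colsum_def
  proof (rule sum_mono)
    fix i assume "i \<in> {0..k}"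
    show "digit B f i * digit B g (k - i) \<le> (if k - i < ?p then (B-1)*(B-1) else 0)"
      using digit_zero[OF assms, of g "k-i"] digit_le[of B f i] digit_le[of B g "k-i"] assms
      by (auto intro: mult_le_mono)
  qed
  also have "\<dots> = (B-1)*(B-1) * card {i\<in>{0..k}. k - i < ?p}"
    by (simp add: sum.If_cases Int_def)
  finally have c1: "colsum B f g k \<le> (B-1)*(B-1) * card {i\<in>{0..k}. k - i < ?p}" .
  have "card {i\<in>{0..k}. k - i < ?p} \<le> card {..<?p}"
    by (rule card_inj_on_le[where f="\<lambda>i. k - i"]) (auto simp: inj_on_def)
  then have "card {i\<in>{0..k}. k - i < ?p} \<le> ?p" by simp
  then have "(B-1)*(B-1) * card {i\<in>{0..k}. k - i < ?p} \<le> (B-1)*(B-1) * ?p"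
    by (rule mult_le_mono2)
  with c1 have "colsum B f g k \<le> (B-1)*(B-1) * ?p" by (rule le_trans)
  then show ?thesis by (simp only: mult.commute)
qed

lemma geom_bound: "B > 0 \<Longrightarrow> (B - 1) * (\<Sum>k<s. B^k) < B^s" for B :: nat
proof (induction s)
  case 0 then show ?case by simp
next
  case (Suc s)
  have "(B - 1) * (\<Sum>k<Suc s. B^k) = (B-1) * (\<Sum>k<s. B^k) + (B-1) * B^s" by (simp add: algebra_simps)
  also have "\<dots> < B^s + (B-1)*B^s" using Suc by simp
  also have "\<dots> = B^Suc s" using Suc.prems by (cases B) auto
  finally show ?case .
qed

lemma low_bound:
  assumes "B \<ge> 2" "s + G = a" "s > 0 \<longrightarrow> prec B g * B \<le> B^G"
  shows "(\<Sum>k<s. colsum B f g k * B^k) < B^a"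
proof (cases "s = 0 \<or> prec B g = 0")
  case True
  then show ?thesis
  proof
    assume "s = 0" then show ?thesis using assms(1) by simp
  next
    assume "prec B g = 0"
    then have "colsum B f g k = 0" for k using colsum_bound[OF assms(1), of f g k] by simp
    then show ?thesis using assms(1) by simp
  qed
next
  case False
  let ?p = "prec B g"
  have "(\<Sum>k<s. colsum B f g k * B^k) \<le> (\<Sum>k<s. ?p * ((B-1)*(B-1)) * B^k)"
    by (intro sum_mono mult_right_mono colsum_bound[OF assms(1)]) simp
  also have "\<dots> = ?p * (B-1) * ((B-1) * (\<Sum>k<s. B^k))" by (simp add: sum_distrib_left algebra_simps)
  also have "\<dots> < ?p * (B-1) * B^s"
    using geom_bound[of B s] assms False by simp
  also have "\<dots> \<le> ?p * B * B^s" by simp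
  also have "\<dots> \<le> B^G * B^s" using assms False by simp
  also have "\<dots> = B^a" using assms(2) by (simp add: power_add[symmetric] add.commute)
  finally show ?thesis .
qed


lemma sum_shift_ivl: "a \<le> b \<Longrightarrow> (\<Sum>k=a..b. F k) = (\<Sum>t<Suc (b-a). F (a+t))" for F :: "nat \<Rightarrow> nat"
proof -
  assume ab: "a \<le> b"
  have "(\<Sum>k=0+a..(b-a)+a. F k) = (\<Sum>t=0..b-a. F (t+a))" by (rule sum.shift_bounds_cl_nat_ivl)
  moreover have "0 + a = a" "(b-a)+a = b" using ab by auto
  moreover have "{0..b-a} = {..<Suc (b-a)}" by auto
  ultimately show ?thesis by (simp add: add.commute)
qed

lemma div_mod_pow: "x div B^a mod B^n = x mod B^(a+n) div B^a" for x B :: nat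
proof (cases "B = 0")
  case True then show ?thesis by (cases "a = 0") (auto simp: power_0_left)
next
  case False
  have "x mod (B^a * B^n) = B^a * (x div B^a mod B^n) + x mod B^a" by (rule mod_mult2_eq)
  then have e: "x mod B^(a+n) = x mod B^a + (x div B^a mod B^n) * B^a" by (simp only: power_add mult.commute add.commute)
  have "(x mod B^a + (x div B^a mod B^n) * B^a) div B^a = x mod B^a div B^a + x div B^a mod B^n"
    using False by simp
  also have "x mod B^a div B^a = 0" by simp
  finally show ?thesis unfolding e by simp
qed

theorem theorem2:
  fixes B f g a b :: nat
  assumes "B \<ge> 2" and "a \<le> b"
  shows "\<exists>e::int. \<bar>e\<bar> \<le> 1 \<and>
    [int (truncD B f g a b) = int (clip B a b (f * g)) + e * int B ^ a] (mod (int B ^ (b + 1)))"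
proof -
  have B0: "B > 0" using assms by simp
  define G where "G = guard B g a"
  define s where "s = a - G"
  define n where "n = Suc (b - a)"
  define h where "h = colsum B f g"
  define C' where "C' = carry B f g s (a - s)"
  define Y' where "Y' = C' + (\<Sum>t<n. h (a+t) * B^t)"
  have Ga: "G \<le> a" unfolding G_def guard_def by simp
  have sG: "s + G = a" using Ga s_def by simp
  have bn: "b + 1 = a + n" using assms(2) n_def by simp
  have out: "outdigit B f g s (a+t) = Y' div B^t mod B" if "t < n" for t
  proof -
    have "carry B f g s ((a - s) + t) = (C' + (\<Sum>t'<t. h (a+t') * B^t')) div B^t"
      using carry_gen[OF B0, of f g s "a-s" t] sG unfolding C'_def h_def by simp
    moreover have "a + t - s = (a - s) + t" using sG by simp
    ultimately have "outdigit B f g s (a+t) = ((C' + (\<Sum>t'<t. h (a+t') * B^t')) div B^t + h (a+t)) mod B"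
      unfolding outdigit_def h_def by simp
    also have "(C' + (\<Sum>t'<t. h (a+t') * B^t')) div B^t + h (a+t) = (C' + (\<Sum>t'<t. h (a+t') * B^t') + h (a+t) * B^t) div B^t"
      using B0 by simp
    also have "\<dots> = (C' + (\<Sum>t'<Suc t. h (a+t') * B^t')) div B^t"
      by (simp add: add.assoc)
    also have "\<dots> mod B = Y' div B^t mod B"
      unfolding Y'_def using digit_stable[OF B0 that, of C' "\<lambda>t'. h (a+t')"] by simp
    finally show ?thesis .
  qed
  have trunc: "truncD B f g a b = B^a * (Y' mod B^n)"
  proof -
    have "truncD B f g a b = (\<Sum>t<n. outdigit B f g s (a+t) * B^(a+t))"
      unfolding truncD_def s_def[symmetric] G_def[symmetric] n_def using sum_shift_ivl[OF assms(2)] by simp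
    also have "\<dots> = (\<Sum>t<n. B^a * ((Y' div B^t mod B) * B^t))"
      by (intro sum.cong) (auto simp: out power_add)
    also have "\<dots> = B^a * (Y' mod B^n)" by (simp add: sum_distrib_left[symmetric] digits_sum)
    finally show ?thesis .
  qed
  have clipeq: "clip B a b (f*g) = B^a * ((f*g) div B^a mod B^n)"
  proof -
    have "clip B a b (f*g) = (\<Sum>t<n. digit B (f*g) (a+t) * B^(a+t))"
      unfolding clip_def n_def using sum_shift_ivl[OF assms(2)] by simp
    also have "\<dots> = (\<Sum>t<n. B^a * (((f*g) div B^a div B^t mod B) * B^t))"
      by (intro sum.cong) (auto simp: digit_def power_add div_mult2_eq)
    also have "\<dots> = B^a * ((f*g) div B^a mod B^n)" by (simp add: sum_distrib_left[symmetric] digits_sum)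
    finally show ?thesis .
  qed
  define S where "S = (\<Sum>k<a+n. h k * B^k)"
  have fgS: "(f*g) div B^a mod B^n = S div B^a mod B^n"
    unfolding div_mod_pow S_def h_def by (subst conv_mod) (rule refl)
  define T where "T = (\<Sum>k<a. h k * B^k)"
  define W where "W = (\<Sum>t<n. h (a+t) * B^t)"
  define Tl where "Tl = (\<Sum>k<s. h k * B^k)"
  define X where "X = (\<Sum>t<a-s. h (s+t) * B^t)"
  have SW: "S = T + B^a * W"
    unfolding S_def T_def W_def by (simp add: sum_split_add sum_distrib_left power_add algebra_simps)
  have SdivY: "S div B^a = T div B^a + W" using SW B0 by simp
  have TX: "T = Tl + B^s * X"
  proof -
    have "T = (\<Sum>k<s + (a-s). h k * B^k)" unfolding T_def using sG by simp
    then show ?thesis unfolding Tl_def X_def by (simp add: sum_split_add sum_distrib_left power_add algebra_simps)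
  qed
  have CX: "C' = X div B^(a-s)"
    using carry_gen[OF B0, of f g s 0 "a-s"] unfolding C'_def X_def h_def by simp
  have Bas: "B^a = B^s * B^(a-s)" using sG by (simp add: power_add[symmetric])
  have CX2: "C' = (B^s * X) div B^a" unfolding CX Bas using B0 by simp
  have low: "Tl < B^a"
  proof -
    have "s > 0 \<longrightarrow> prec B g * B \<le> B^G"
    proof
      assume "s > 0"
      then have "G < a" using s_def by simp
      moreover have "G = min a (nat \<lceil>log (real B) (real (prec B g))\<rceil> + 1)" unfolding G_def guard_def ..
      ultimately have "G = nat \<lceil>log (real B) (real (prec B g))\<rceil> + 1" by (simp add: min_def split: if_splits)
      then show "prec B g * B \<le> B^G" using prec_le_guard[OF assms(1), of g] by simp
    qed
    then show ?thesis using low_bound[OF assms(1) sG] unfolding Tl_def h_def by simp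
  qed
  obtain e :: nat where e: "e \<le> 1" "T div B^a = C' + e"
  proof -
    define r where "r = (B^s * X) mod B^a"
    have r: "r < B^a" unfolding r_def using B0 by simp
    have "B^s * X = C' * B^a + r" unfolding CX2 r_def by (rule div_mult_mod_eq[symmetric])
    then have "T = (Tl + r) + C' * B^a" using TX by simp
    then have "T div B^a = (Tl + r) div B^a + C'" using B0 by simp
    moreover have "(Tl + r) div B^a \<le> 1"
    proof -
      have "Tl + r < 2 * B^a" using low r by simp
      then have "(Tl + r) div B^a < 2" by (rule less_mult_imp_div_less)
      then show ?thesis by simp
    qed
    ultimately show ?thesis using that by (simp add: add.commute)
  qed
  have YW: "Y' = C' + W" unfolding Y'_def W_def ..
  have clip2: "clip B a b (f*g) = B^a * ((Y' + e) mod B^n)"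
  proof -
    have "S div B^a = Y' + e" using SdivY e(2) YW by simp
    then show ?thesis using clipeq fgS by simp
  qed
  define M where "M = B^(b+1)"
  have Mdef: "M = B^a * B^n" unfolding M_def bn power_add ..
  have t2: "truncD B f g a b = (B^a * Y') mod M" unfolding trunc Mdef by (simp add: mod_mult_mult1)
  have c2: "clip B a b (f*g) = (B^a * Y' + e * B^a) mod M"
  proof -
    have "B^a * Y' + e * B^a = B^a * (Y' + e)" by (simp add: algebra_simps)
    then show ?thesis unfolding clip2 Mdef by (simp only: mod_mult_mult1)
  qed
  show ?thesis
  proof (intro exI conjI)
    show "\<bar>- int e\<bar> \<le> 1" using e by simp
    have f1: "[int (truncD B f g a b) = int (B^a * Y')] (mod int M)"
      unfolding t2 cong_def of_nat_mod by (rule mod_mod_trivial)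
    have f2: "[int (clip B a b (f*g)) = int (B^a * Y' + e * B^a)] (mod int M)"
      unfolding c2 cong_def of_nat_mod by (rule mod_mod_trivial)
    have "int (B^a * Y' + e * B^a) = int (B^a * Y') + int e * int B ^ a" by simp
    with f2 have "[int (clip B a b (f*g)) = int (B^a * Y') + int e * int B ^ a] (mod int M)" by simp
    then have "[int (clip B a b (f*g)) + - int e * int B ^ a = int (B^a * Y') + int e * int B ^ a + - int e * int B ^ a] (mod int M)"
      by (rule cong_add) (rule cong_refl)
    then have "[int (clip B a b (f*g)) + - int e * int B ^ a = int (B^a * Y')] (mod int M)" by simp
    then have "[int (truncD B f g a b) = int (clip B a b (f*g)) + - int e * int B ^ a] (mod int M)"
      using f1 by (metis cong_sym cong_trans)
    moreover have "int M = int B ^ (b + 1)" unfolding M_def by simp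
    ultimately show "[int (truncD B f g a b) = int (clip B a b (f*g)) + - int e * int B ^ a] (mod (int B ^ (b + 1)))"
      by simp
  qed
qed
end
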